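(* Let $\delta\in(0,1)$. For all $x,y\in[\delta,1]$, \[ (-\ln x)-(-\ln y)+\frac{x-y}{y}\ \ge\ \frac{|\ln x-\ln y|^2}{2\ln(1/\delta)\vee 4}. \]
   Context: The term $\frac{x-y}{y}$ equals $-\nabla(-\ln)|_y\,(x-y)$. $a\vee b=\max(a,b)$. *)

theory Defs
  imports Complex_Main
begin

end

theory Submission
  imports Defs
begin

lemma pade_aux: "(v::real) \<ge> 0 \<Longrightarrow> (2 - v) * exp v \<le> 2 + v"
proof -
  assume v: "v \<ge> 0"
  define h where "h = (\<lambda>w::real. 2 + w - (2 - w) * exp w)"
  have d: "\<And>w. (h has_real_derivative (1 + (w - 1) * exp w)) (at w)"
    unfolding h_def
    apply (rule derivative_eq_intros refl)+
    apply (simp add: algebra_simps)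
    done
  have nn: "\<And>w::real. 0 \<le> 1 + (w - 1) * exp w"
  proof -
    fix w :: real
    have "1 - w \<le> exp (-w)" using exp_ge_add_one_self[of "-w"] by simp
    hence "(1 - w) * exp w \<le> exp (-w) * exp w" by (simp add: mult_right_mono)
    also have "\<dots> = 1" by (simp add: exp_minus field_simps)
    finally have "(1 - w) * exp w \<le> 1" .
    moreover have "(w - 1) * exp w = - ((1 - w) * exp w)" by (simp add: algebra_simps)
    ultimately show "0 \<le> 1 + (w - 1) * exp w" by linarith
  qed
  have "h 0 \<le> h v"
    using DERIV_nonneg_imp_nondecreasing[of 0 v h] d nn v by blast
  thus ?thesis by (simp add: h_def)
qed

theorem lemma3:
  fixes \<delta> x y :: real
  assumes "0 < \<delta>" and "\<delta> < 1"
    and "x \<in> {\<delta>..1}" and "y \<in> {\<delta>..1}"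
  shows "(- ln x) - (- ln y) + (x - y) / y
           \<ge> \<bar>ln x - ln y\<bar>^2 / max (2 * ln (1 / \<delta>)) 4"
proof -
  define u where "u = ln x - ln y"
  define M where "M = max (2 * ln (1 / \<delta>)) 4"
  have xp: "x > 0" and yp: "y > 0" using assms by auto
  have xy: "x / y = exp u" using xp yp by (simp add: u_def exp_diff)
  have lhs: "(- ln x) - (- ln y) + (x - y) / y = exp u - 1 - u"
    using xy yp by (simp add: u_def diff_divide_distrib)
  have M4: "M \<ge> 4" by (simp add: M_def)
  have ub: "\<bar>u\<bar> \<le> ln (1 / \<delta>)"
  proof -
    have "ln \<delta> \<le> ln x" "ln x \<le> 0" "ln \<delta> \<le> ln y" "ln y \<le> 0"
      using assms xp yp by auto
    moreover have "ln (1/\<delta>) = - ln \<delta>" using assms by (simp add: ln_div)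
    ultimately show ?thesis by (simp add: u_def abs_if)
  qed
  have key: "exp u - 1 - u \<ge> u^2 / M"
  proof (cases "u \<ge> 0")
    case True
    have "exp u \<ge> 1 + u + u^2/2" using exp_lower_Taylor_quadratic[OF True] by simp
    moreover have "u^2 / M \<le> u^2 / 2" using M4
      by (intro divide_left_mono) auto
    ultimately show ?thesis by linarith
  next
    case False
    define v where "v = - u"
    have v: "v > 0" using False v_def by simp
    have p: "(2 - v) * exp v \<le> 2 + v" using pade_aux v by simp
    have e: "exp u * exp v = 1" by (simp add: v_def exp_minus field_simps)
    have "(2 - v) \<le> (2 + v) * exp u"
    proof -
      have "(2 - v) * exp v * exp u \<le> (2 + v) * exp u"
        using p by (simp add: mult_right_mono)
      thus ?thesis using e by (simp add: algebra_simps)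
    qed
    hence g: "exp u - 1 - u \<ge> v^2 / (2 + v)"
      using v by (simp add: v_def field_simps power2_eq_square)
    have "2 + v \<le> M"
    proof (cases "v \<le> 2")
      case True thus ?thesis using M4 by simp
    next
      case False
      have "v \<le> ln (1/\<delta>)" using ub v by (simp add: v_def)
      thus ?thesis using False by (simp add: M_def)
    qed
    hence "v^2 / M \<le> v^2 / (2 + v)" using v
      by (intro divide_left_mono) auto
    thus ?thesis using g by (simp add: v_def)
  qed
  show ?thesis using key lhs by (simp add: u_def M_def)
qed

end
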